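(* Let $\mathcal T$ be an infinite set of positive integers and for each $t\in\mathcal T$ let $H_t$ be a triangle-free graph on $t$ vertices that is $d$-regular with $d=\Theta(t^{2/3})$ and all of whose eigenvalues other than the largest have absolute value $O(t^{1/3})$. Then for any choice of subgraphs $H'_t\subseteq H_t$ ($t\in\mathcal T$) with $|H'_t|=(1-o(1))|H_t|$, there are sets $U_t\subseteq V(H_t)$ with $|U_t|=o(t)$ such that $H'_t-U_t$ is connected and the cycle space $\mathcal C(H'_t-U_t)$ is spanned by cycles of length at most $11$ (asymptotics as $t\to\infty$ in $\mathcal T$).
   Context: $|H|$ denotes the number of edges. Eigenvalues are those of the adjacency matrix. $H'-U$ denotes the graph obtained from $H'$ by deleting the vertices in $U$. The cycle space $\mathcal C(G)$ of a graph $G$ is the subspace of the $\mathbb F_2$-vector space of edge subsets of $G$ generated by (the edge sets of) cycles of $G$. *)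

theory Defs
  imports Complex_Main "Jordan_Normal_Form.Char_Poly" "HOL-Computational_Algebra.Polynomial"
    "HOL-Library.Multiset"
begin

definition simple_graph :: "'a set \<Rightarrow> 'a set set \<Rightarrow> bool" where
  "simple_graph V E \<longleftrightarrow> finite V \<and> (\<forall>e\<in>E. \<exists>u v. e = {u, v} \<and> u \<noteq> v \<and> u \<in> V \<and> v \<in> V)"

definition degree :: "'a set set \<Rightarrow> 'a \<Rightarrow> nat" where
  "degree E v = card {e\<in>E. v \<in> e}"

definition regular :: "'a set \<Rightarrow> 'a set set \<Rightarrow> nat \<Rightarrow> bool" where
  "regular V E d \<longleftrightarrow> (\<forall>v\<in>V. degree E v = d)"

definition triangle_free :: "'a set set \<Rightarrow> bool" where
  "triangle_free E \<longleftrightarrow> \<not> (\<exists>a b c. {a,b} \<in> E \<and> {b,c} \<in> E \<and> {a,c} \<in> E \<and> a \<noteq> b \<and> b \<noteq> c \<and> a \<noteq> c)"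

definition adj_matrix :: "nat \<Rightarrow> nat set set \<Rightarrow> real mat" where
  "adj_matrix n E = mat n n (\<lambda>(i,j). if {i,j} \<in> E then 1 else 0)"

definition adj_eigenvalues :: "nat \<Rightarrow> nat set set \<Rightarrow> complex multiset" where
  "adj_eigenvalues n E = proots (char_poly (map_mat complex_of_real (adj_matrix n E)))"

definition is_walk :: "'a set set \<Rightarrow> 'a list \<Rightarrow> bool" where
  "is_walk E xs \<longleftrightarrow> xs \<noteq> [] \<and> (\<forall>i. Suc i < length xs \<longrightarrow> {xs ! i, xs ! Suc i} \<in> E)"

definition connected_graph :: "'a set \<Rightarrow> 'a set set \<Rightarrow> bool" where
  "connected_graph V E \<longleftrightarrow> (\<forall>u\<in>V. \<forall>v\<in>V. \<exists>xs. is_walk E xs \<and> hd xs = u \<and> last xs = v)"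

definition is_cycle :: "'a set set \<Rightarrow> 'a list \<Rightarrow> bool" where
  "is_cycle E xs \<longleftrightarrow> length xs \<ge> 3 \<and> distinct xs \<and>
     (\<forall>i<length xs. {xs ! i, xs ! ((Suc i) mod length xs)} \<in> E)"

definition cycle_edges :: "'a list \<Rightarrow> 'a set set" where
  "cycle_edges xs = {{xs ! i, xs ! ((Suc i) mod length xs)} | i. i < length xs}"

text \<open>F_2-span of a family of edge sets (addition = symmetric difference).\<close>
inductive_set f2_span :: "'a set set set \<Rightarrow> 'a set set set" for S where
  zero: "{} \<in> f2_span S"
| add: "X \<in> f2_span S \<Longrightarrow> C \<in> S \<Longrightarrow> (X - C) \<union> (C - X) \<in> f2_span S"

definition cycle_space :: "'a set set \<Rightarrow> 'a set set set" where
  "cycle_space E = f2_span {cycle_edges xs | xs. is_cycle E xs}"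

definition short_cycle_span :: "nat \<Rightarrow> 'a set set \<Rightarrow> 'a set set set" where
  "short_cycle_span k E = f2_span {cycle_edges xs | xs. is_cycle E xs \<and> length xs \<le> k}"

definition del_vertices_V :: "'a set \<Rightarrow> 'a set \<Rightarrow> 'a set" where
  "del_vertices_V V U = V - U"
definition del_vertices_E :: "'a set set \<Rightarrow> 'a set \<Rightarrow> 'a set set" where
  "del_vertices_E E U = {e\<in>E. e \<inter> U = {}}"

definition along :: "nat set \<Rightarrow> nat filter" where
  "along T = inf sequentially (principal T)"

end

theory Submission
  imports Defs "Jordan_Normal_Form.Schur_Decomposition" "HOL-Real_Asymp.Real_Asymp"
begin



lemma trace_comm:
  fixes X Y :: "'a::comm_ring_1 mat"
  assumes X: "X \<in> carrier_mat n n" and Y: "Y \<in> carrier_mat n n"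
  shows "(\<Sum>i<n. (X*Y)$$(i,i)) = (\<Sum>i<n. (Y*X)$$(i,i))"
proof -
  have "(\<Sum>i<n. (X*Y)$$(i,i)) = (\<Sum>i<n. \<Sum>j<n. X$$(i,j)*Y$$(j,i))"
    using X Y by (auto simp: scalar_prod_def intro!: sum.cong simp flip: atLeast0LessThan)
  also have "\<dots> = (\<Sum>j<n. \<Sum>i<n. Y$$(j,i)*X$$(i,j))"
    by (subst sum.swap) (simp add: mult.commute)
  also have "\<dots> = (\<Sum>i<n. (Y*X)$$(i,i))"
    using X Y by (auto simp: scalar_prod_def intro!: sum.cong simp flip: atLeast0LessThan)
  finally show ?thesis .
qed

lemma upper_tri_mult:
  fixes U V :: "'a::comm_ring_1 mat"
  assumes U: "U \<in> carrier_mat n n" and V: "V \<in> carrier_mat n n"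
    and uU: "upper_triangular U" and uV: "upper_triangular V"
  shows "upper_triangular (U*V) \<and> (\<forall>i<n. (U*V)$$(i,i) = U$$(i,i)*V$$(i,i))"
proof -
  have z: "U$$(i,k) = 0" if "k < i" "i < n" for i k using uU U that by auto
  have z2: "V$$(i,k) = 0" if "k < i" "i < n" for i k using uV V that by auto
  have A: "(U*V)$$(i,j) = 0" if "i<n" "j<i" for i j
  proof -
    have "(U*V)$$(i,j) = (\<Sum>k<n. U$$(i,k)*V$$(k,j))"
      using U V that by (auto simp: scalar_prod_def simp flip: atLeast0LessThan)
    also have "\<dots> = 0"
    proof (rule sum.neutral, intro ballI)
      fix k assume "k \<in> {..<n}"
      then show "U$$(i,k)*V$$(k,j) = 0" using z z2 that by (cases "k < i") auto
    qed
    finally show ?thesis .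
  qed
  have B: "(U*V)$$(i,i) = U$$(i,i)*V$$(i,i)" if "i<n" for i
  proof -
    have "(U*V)$$(i,i) = (\<Sum>k<n. U$$(i,k)*V$$(k,i))"
      using U V that by (auto simp: scalar_prod_def simp flip: atLeast0LessThan)
    also have "\<dots> = U$$(i,i)*V$$(i,i) + (\<Sum>k\<in>{..<n}-{i}. U$$(i,k)*V$$(k,i))"
      using that by (subst sum.remove[of _ i]) auto
    also have "(\<Sum>k\<in>{..<n}-{i}. U$$(i,k)*V$$(k,i)) = 0"
    proof (rule sum.neutral, intro ballI)
      fix k assume "k \<in> {..<n}-{i}"
      then show "U$$(i,k)*V$$(k,i) = 0" using z z2 that by (cases "k < i") auto
    qed
    finally show ?thesis by simp
  qed
  show ?thesis using A B U V unfolding upper_triangular_def by auto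
qed

lemma trace4_eigs:
  fixes A :: "complex mat"
  assumes A: "A \<in> carrier_mat n n"
  shows "(\<Sum>i<n. ((A*A)*(A*A))$$(i,i)) = (\<Sum>\<mu>\<in>#proots (char_poly A). \<mu>^4)"
proof -
  obtain as where cp: "char_poly A = (\<Prod>a\<leftarrow>as. [:- a, 1:])" and len: "length as = n"
    using char_poly_factorized[OF A] by blast
  have pr: "proots (char_poly A) = mset as"
    unfolding cp
  proof (induction as)
    case (Cons a as)
    have nz: "(\<Prod>a\<leftarrow>as. [:- a, 1:]) \<noteq> 0" by (auto simp: prod_list_zero_iff)
    show ?case using Cons nz
      by (simp only: list.map prod_list.Cons, subst proots_mult) auto
  qed simp
  obtain B P Q where sd: "schur_decomposition A as = (B,P,Q)" by (cases "schur_decomposition A as") auto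
  from schur_decomposition[OF A cp sd] have sim: "similar_mat_wit A B P Q"
    and ut: "upper_triangular B" and dg: "diag_mat B = as" by auto
  from sim A have Bc: "B \<in> carrier_mat n n" and Pc: "P \<in> carrier_mat n n" and Qc: "Q \<in> carrier_mat n n"
    and PQ: "P*Q = 1\<^sub>m n" and QP: "Q*P = 1\<^sub>m n" and AB: "A = P*B*Q"
    unfolding similar_mat_wit_def Let_def by auto
  have AA: "A*A = P*(B*B)*Q"
  proof -
    have "A*A = P*B*(Q*P)*B*Q" unfolding AB using Bc Pc Qc
      by (simp add: assoc_mult_mat[of _ n n _ n _ n])
    then show ?thesis using Bc Pc Qc QP by (simp add: assoc_mult_mat[of _ n n _ n _ n])
  qed
  let ?S = "B*B"
  have Sc: "?S \<in> carrier_mat n n" using Bc by auto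
  have A4: "(A*A)*(A*A) = P*(?S*?S)*Q"
  proof -
    have "(A*A)*(A*A) = P*?S*(Q*P)*?S*Q" unfolding AA using Sc Pc Qc
      by (simp add: assoc_mult_mat[of _ n n _ n _ n])
    then show ?thesis using Sc Pc Qc QP by (simp add: assoc_mult_mat[of _ n n _ n _ n] left_mult_one_mat)
  qed
  have u1: "upper_triangular ?S" "\<forall>i<n. ?S$$(i,i) = B$$(i,i)^2"
    using upper_tri_mult[OF Bc Bc ut ut] by (auto simp: power2_eq_square)
  have u2: "\<forall>i<n. (?S*?S)$$(i,i) = B$$(i,i)^4"
    using upper_tri_mult[OF Sc Sc u1(1) u1(1)] u1(2) by (simp add: power_mult_distrib flip: power_add)
  have "(\<Sum>i<n. ((A*A)*(A*A))$$(i,i)) = (\<Sum>i<n. (P*((?S*?S)*Q))$$(i,i))"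
    unfolding A4 using Sc Pc Qc by (simp add: assoc_mult_mat[of _ n n _ n _ n])
  also have "\<dots> = (\<Sum>i<n. (((?S*?S)*Q)*P)$$(i,i))"
    by (rule trace_comm) (use Sc Pc Qc in auto)
  also have "\<dots> = (\<Sum>i<n. (?S*?S)$$(i,i))"
  proof -
    have "((?S*?S)*Q)*P = (?S*?S)*(Q*P)" by (rule assoc_mult_mat[of _ n n]) (use Sc Pc Qc in auto)
    also have "\<dots> = ?S*?S" using QP Sc by (simp add: right_mult_one_mat[of "?S*?S" n n])
    finally show ?thesis by simp
  qed
  also have "\<dots> = (\<Sum>i<n. B$$(i,i)^4)" using u2 by simp
  also have "\<dots> = (\<Sum>a\<leftarrow>as. a^4)"
    using dg Bc unfolding diag_mat_def
    by (auto simp: sum_list_map_eq_sum_count sum_list_sum_nth atLeast0LessThan) 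
  also have "\<dots> = (\<Sum>\<mu>\<in>#mset as. \<mu>^4)" by (metis mset_map sum_mset_sum_list)
  finally show ?thesis using pr by simp
qed



lemma eig_bound:
  fixes M :: "complex mat"
  assumes M: "M \<in> carrier_mat n n"
    and rows: "\<forall>i<n. (\<Sum>j<n. cmod (M$$(i,j))) \<le> D"
    and mu: "\<mu> \<in># proots (char_poly M)"
  shows "cmod \<mu> \<le> D"
proof -
  have nz: "char_poly M \<noteq> 0" using degree_monic_char_poly[OF M] by auto
  have "poly (char_poly M) \<mu> = 0" using mu nz by simp
  then have "eigenvalue M \<mu>" using eigenvalue_root_char_poly[OF M] by simp
  then obtain v where ev: "eigenvector M v \<mu>" unfolding eigenvalue_def by blast
  then have v: "v \<in> carrier_vec n" and v0: "v \<noteq> 0\<^sub>v n" and Mv: "M *\<^sub>v v = \<mu> \<cdot>\<^sub>v v"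
    using M unfolding eigenvector_def by auto
  obtain k where k: "k < n" "v$k \<noteq> 0"
    using v v0 by (metis eq_vecI carrier_vecD index_zero_vec(1,2))
  have fin: "finite ((\<lambda>j. cmod (v$j)) ` {..<n})" by simp
  have ne: "(\<lambda>j. cmod (v$j)) ` {..<n} \<noteq> {}" using k by auto
  obtain i where i: "i < n" "cmod (v$i) = Max ((\<lambda>j. cmod (v$j)) ` {..<n})"
    using Max_in[OF fin ne] by auto
  have mx: "cmod (v$j) \<le> cmod (v$i)" if "j < n" for j
    using i Max_ge[OF fin] that by auto
  have pos: "cmod (v$i) > 0" using mx[OF k(1)] k by auto
  have "\<mu> * v$i = (\<Sum>j<n. M$$(i,j) * v$j)"
  proof -
    have "(M *\<^sub>v v)$i = \<mu> * v$i" using Mv i v by simp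
    moreover have "(M *\<^sub>v v)$i = (\<Sum>j<n. M$$(i,j) * v$j)"
      using M v i by (auto simp: mult_mat_vec_def scalar_prod_def atLeast0LessThan)
    ultimately show ?thesis by simp
  qed
  then have "cmod \<mu> * cmod (v$i) = cmod (\<Sum>j<n. M$$(i,j) * v$j)" by (metis norm_mult)
  also have "\<dots> \<le> (\<Sum>j<n. cmod (M$$(i,j)) * cmod (v$j))"
    by (rule order.trans[OF norm_sum]) (simp add: norm_mult)
  also have "\<dots> \<le> (\<Sum>j<n. cmod (M$$(i,j)) * cmod (v$i))"
    by (rule sum_mono) (simp add: mult_left_mono mx)
  also have "\<dots> = (\<Sum>j<n. cmod (M$$(i,j))) * cmod (v$i)" by (simp add: sum_distrib_right)
  also have "\<dots> \<le> D * cmod (v$i)" using rows i pos by (simp add: mult_right_mono)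
  finally show ?thesis using pos by simp
qed



definition sgp :: "nat \<Rightarrow> nat set set \<Rightarrow> bool" where
  "sgp n M \<longleftrightarrow> (\<forall>e\<in>M. \<exists>u v. e = {u,v} \<and> u \<noteq> v \<and> u < n \<and> v < n)"

definition adj :: "nat set set \<Rightarrow> nat \<Rightarrow> nat \<Rightarrow> real" where
  "adj M i j = (if {i,j} \<in> M then 1 else 0)"

lemma adj_sym: "adj M i j = adj M j i"
  by (simp add: adj_def insert_commute)

lemma adj_nonneg: "adj M i j \<ge> 0" by (simp add: adj_def)

lemma sgp_finite: "sgp n M \<Longrightarrow> finite M"
proof -
  assume "sgp n M"
  then have "M \<subseteq> Pow {..<n}" unfolding sgp_def by fastforce
  then show "finite M" by (rule finite_subset) simp
qed

lemma sgp_mono: "sgp n M \<Longrightarrow> N \<subseteq> M \<Longrightarrow> sgp n N"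
  unfolding sgp_def by blast

lemma deg_sum:
  assumes M: "sgp n M" and r: "r < n"
  shows "(\<Sum>u<n. adj M r u) = real (degree M r)"
proof -
  have "(\<Sum>u<n. adj M r u) = real (card {u\<in>{..<n}. {r,u} \<in> M})"
  proof -
    have e: "{..<n} \<inter> {u. {r,u}\<in>M} = {u\<in>{..<n}. {r,u}\<in>M}" by auto
    show ?thesis unfolding adj_def by (simp add: sum.If_cases e)
  qed
  also have "card {u\<in>{..<n}. {r,u} \<in> M} = card {e\<in>M. r \<in> e}"
  proof -
    have inj: "inj_on (\<lambda>u. {r,u}) {u\<in>{..<n}. {r,u} \<in> M}"
      by (rule inj_onI) (metis doubleton_eq_iff)
    have img: "(\<lambda>u. {r,u}) ` {u\<in>{..<n}. {r,u} \<in> M} = {e\<in>M. r \<in> e}"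
    proof (intro equalityI subsetI)
      fix e assume "e \<in> (\<lambda>u. {r,u}) ` {u\<in>{..<n}. {r,u} \<in> M}"
      then show "e \<in> {e\<in>M. r \<in> e}" by blast
    next
      fix e assume e: "e \<in> {e\<in>M. r \<in> e}"
      then obtain a b where ab: "e = {a,b}" "a < n" "b < n" using M unfolding sgp_def by blast
      show "e \<in> (\<lambda>u. {r,u}) ` {u\<in>{..<n}. {r,u} \<in> M}"
      proof (cases "r = a")
        case True
        then show ?thesis using ab e by (intro image_eqI[of _ _ b]) auto
      next
        case False
        then have "r = b" using ab e by blast
        then show ?thesis using ab e by (intro image_eqI[of _ _ a]) (auto simp: insert_commute)
      qed
    qed
    show ?thesis using card_image[OF inj] img by simp
  qed
  finally show ?thesis by (simp add: degree_def)
qed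

lemma handshake:
  assumes M: "sgp n M"
  shows "(\<Sum>r<n. real (degree M r)) = 2 * real (card M)"
proof -
  have fin: "finite M" using sgp_finite[OF M] .
  have "(\<Sum>r<n. real (degree M r)) = (\<Sum>r<n. \<Sum>e\<in>M. (if r \<in> e then 1 else 0::real))"
  proof (rule sum.cong[OF refl])
    fix r
    have e: "M \<inter> {e. r \<in> e} = {e\<in>M. r \<in> e}" by auto
    show "real (degree M r) = (\<Sum>e\<in>M. (if r \<in> e then 1 else 0::real))"
      unfolding degree_def using fin by (simp add: sum.If_cases e)
  qed
  also have "\<dots> = (\<Sum>e\<in>M. \<Sum>r<n. (if r \<in> e then 1 else 0::real))" by (rule sum.swap)
  also have "\<dots> = (\<Sum>e\<in>M. 2)"
  proof (rule sum.cong[OF refl])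
    fix e assume "e \<in> M"
    then obtain a b where ab: "e = {a,b}" "a \<noteq> b" "a < n" "b < n" using M unfolding sgp_def by blast
    have "(\<Sum>r<n. (if r \<in> e then 1 else 0::real)) = real (card ({..<n} \<inter> e))"
      by (simp add: sum.If_cases)
    also have "{..<n} \<inter> e = {a,b}" using ab by auto
    finally show "(\<Sum>r<n. (if r \<in> e then 1 else 0::real)) = 2" using ab by simp
  qed
  finally show ?thesis by simp
qed



definition cod :: "nat \<Rightarrow> nat set set \<Rightarrow> nat \<Rightarrow> nat \<Rightarrow> real" where
  "cod n E i j = (\<Sum>k<n. adj E i k * adj E k j)"

lemma cod_sym: "cod n E i j = cod n E j i"
  unfolding cod_def by (simp add: adj_sym mult.commute)

lemma size_proots_char:
  fixes A :: "complex mat" assumes A: "A \<in> carrier_mat n n"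
  shows "size (proots (char_poly A)) = n"
proof -
  obtain as where cp: "char_poly A = (\<Prod>a\<leftarrow>as. [:- a, 1:])" and len: "length as = n"
    using char_poly_factorized[OF A] by blast
  have pr: "proots (char_poly A) = mset as"
    unfolding cp
  proof (induction as)
    case (Cons a as)
    have nz: "(\<Prod>a\<leftarrow>as. [:- a, 1:]) \<noteq> 0" by (auto simp: prod_list_zero_iff)
    show ?case using Cons nz
      by (simp only: list.map prod_list.Cons, subst proots_mult) auto
  qed simp
  then show ?thesis using len by simp
qed

lemma mset_pow4_bound:
  fixes R :: "complex multiset"
  assumes "\<forall>\<mu>\<in>#R. cmod \<mu> \<le> c"
  shows "cmod (\<Sum>\<mu>\<in>#R. \<mu>^4) \<le> real (size R) * c^4"
  using assms
proof (induction R)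
  case empty then show ?case by simp
next
  case (add x R)
  have "cmod x ^ 4 \<le> c^4" using add.prems by (intro power_mono) auto
  then have "cmod (x^4) \<le> c^4" by (simp add: norm_power)
  moreover have "cmod (\<Sum>\<mu>\<in>#R. \<mu>^4) \<le> real (size R) * c^4" using add by auto
  ultimately show ?case
    by (auto intro: order.trans[OF norm_triangle_ineq] simp: algebra_simps)
qed

lemma spec_C4:
  assumes E: "sgp n E" and reg: "\<forall>v<n. degree E v = d"
    and lam: "lam1 \<in># adj_eigenvalues n E"
    and rest: "\<forall>\<mu>\<in>#(adj_eigenvalues n E - {#lam1#}). cmod \<mu> \<le> c"
  shows "(\<Sum>i<n. \<Sum>j<n. (cod n E i j)^2) \<le> real d ^ 4 + real n * c^4"
proof -
  define Ac where "Ac = map_mat complex_of_real (adj_matrix n E)"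
  have Ac: "Ac \<in> carrier_mat n n" unfolding Ac_def adj_matrix_def by auto
  have Ae: "Ac $$ (i,j) = complex_of_real (adj E i j)" if "i<n" "j<n" for i j
    using that unfolding Ac_def adj_matrix_def adj_def by auto
  have A2: "(Ac*Ac) $$ (i,j) = complex_of_real (cod n E i j)" if "i<n" "j<n" for i j
    using that Ac by (simp add: scalar_prod_def Ae cod_def atLeast0LessThan)
  have A4: "((Ac*Ac)*(Ac*Ac)) $$ (i,i) = complex_of_real (\<Sum>j<n. (cod n E i j)^2)" if "i<n" for i
  proof -
    define S where "S = Ac*Ac"
    have Sc: "S \<in> carrier_mat n n" using Ac unfolding S_def by auto
    have "(S*S) $$ (i,i) = (\<Sum>j<n. S$$(i,j) * S$$(j,i))"
      using Sc that by (simp add: scalar_prod_def atLeast0LessThan)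
    also have "\<dots> = (\<Sum>j<n. complex_of_real ((cod n E i j)^2))"
      using that by (intro sum.cong refl) (simp add: S_def A2 power2_eq_square cod_sym[of n E _ i])
    finally show ?thesis unfolding S_def by simp
  qed
  have "complex_of_real (\<Sum>i<n. \<Sum>j<n. (cod n E i j)^2) = (\<Sum>\<mu>\<in>#adj_eigenvalues n E. \<mu>^4)"
    using trace4_eigs[OF Ac] A4 unfolding adj_eigenvalues_def Ac_def[symmetric] by simp
  also have "adj_eigenvalues n E = add_mset lam1 (adj_eigenvalues n E - {#lam1#})"
    using lam by simp
  finally have eq: "complex_of_real (\<Sum>i<n. \<Sum>j<n. (cod n E i j)^2) =
      lam1^4 + (\<Sum>\<mu>\<in>#(adj_eigenvalues n E - {#lam1#}). \<mu>^4)" by simp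
  have rows: "\<forall>i<n. (\<Sum>j<n. cmod (Ac$$(i,j))) \<le> real d"
  proof (intro allI impI)
    fix i assume i: "i<n"
    have "(\<Sum>j<n. cmod (Ac$$(i,j))) = (\<Sum>j<n. adj E i j)"
      using i by (intro sum.cong) (auto simp: Ae adj_def)
    also have "\<dots> = real d" using deg_sum[OF E i] reg i by simp
    finally show "(\<Sum>j<n. cmod (Ac$$(i,j))) \<le> real d" by simp
  qed
  have l1: "cmod lam1 \<le> real d"
    using eig_bound[OF Ac rows] lam unfolding adj_eigenvalues_def Ac_def by simp
  have l4: "cmod (lam1^4) \<le> real d ^ 4"
    unfolding norm_power by (intro power_mono l1) simp
  have sz: "size (adj_eigenvalues n E - {#lam1#}) \<le> n"
    using size_proots_char[OF Ac] unfolding adj_eigenvalues_def Ac_def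
    by (metis size_Diff1_le)
  have r4: "cmod (\<Sum>\<mu>\<in>#(adj_eigenvalues n E - {#lam1#}). \<mu>^4) \<le> real n * c^4"
  proof -
    have c4: "c^4 \<ge> 0" by (simp add: zero_le_even_power)
    have "cmod (\<Sum>\<mu>\<in>#(adj_eigenvalues n E - {#lam1#}). \<mu>^4) \<le> real (size (adj_eigenvalues n E - {#lam1#})) * c^4"
      by (rule mset_pow4_bound[OF rest])
    also have "\<dots> \<le> real n * c^4" using sz c4 by (intro mult_right_mono) auto
    finally show ?thesis .
  qed
  have "(\<Sum>i<n. \<Sum>j<n. (cod n E i j)^2) = Re (complex_of_real (\<Sum>i<n. \<Sum>j<n. (cod n E i j)^2))" by simp
  also have "\<dots> \<le> cmod (lam1^4 + (\<Sum>\<mu>\<in>#(adj_eigenvalues n E - {#lam1#}). \<mu>^4))"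
    unfolding eq by (rule complex_Re_le_cmod)
  also have "\<dots> \<le> real d ^ 4 + real n * c^4"
    using l4 r4 by (intro order.trans[OF norm_triangle_ineq]) auto
  finally show ?thesis .
qed




definition sd :: "'a set \<Rightarrow> 'a set \<Rightarrow> 'a set" where
  "sd A B = (A - B) \<union> (B - A)"

lemma span_sd:
  assumes X: "X \<in> f2_span S" and Y: "Y \<in> f2_span S"
  shows "sd X Y \<in> f2_span S"
  using Y
proof (induction Y rule: f2_span.induct)
  case zero
  then show ?case using X by (simp add: sd_def)
next
  case (add Y C)
  have "sd X ((Y - C) \<union> (C - Y)) = (sd X Y - C) \<union> (C - sd X Y)" unfolding sd_def by blast
  then show ?case using f2_span.add[OF add.IH add.hyps(2)] by simp
qed

lemma span_single: "C \<in> S \<Longrightarrow> C \<in> f2_span S"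
  using f2_span.add[OF f2_span.zero] by fastforce

lemma span_mono:
  assumes "X \<in> f2_span S" "S \<subseteq> T" shows "X \<in> f2_span T"
  using assms(1)
proof (induction rule: f2_span.induct)
  case zero then show ?case by (rule f2_span.zero)
next
  case (add X C) then show ?case using assms(2) by (blast intro: f2_span.add)
qed

lemma span_sum:
  fixes k :: nat
  assumes "\<forall>i<k. {e. odd (c i e)} \<in> f2_span S"
  shows "{e. odd (\<Sum>i<k. c i e :: nat)} \<in> f2_span S"
  using assms
proof (induction k)
  case 0
  then show ?case by (simp add: f2_span.zero)
next
  case (Suc k)
  have eq: "{e. odd (\<Sum>i<Suc k. c i e)} = sd {e. odd (\<Sum>i<k. c i e)} {e. odd (c k e)}"
    unfolding sd_def by auto
  have ih: "{e. odd (\<Sum>i<k. c i e)} \<in> f2_span S" using Suc.IH Suc.prems by simp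
  have ck: "{e. odd (c k e)} \<in> f2_span S" using Suc.prems by simp
  show ?case unfolding eq by (rule span_sd[OF ih ck])
qed

lemma is_walk_single[simp]: "is_walk E [x]"
  unfolding is_walk_def by simp

lemma is_walk_Cons2[simp]: "is_walk E (x # y # xs) \<longleftrightarrow> {x,y} \<in> E \<and> is_walk E (y # xs)"
proof
  assume w: "is_walk E (x # y # xs)"
  have "Suc 0 < length (x # y # xs)" by simp
  then have "{(x#y#xs) ! 0, (x#y#xs) ! Suc 0} \<in> E" using w unfolding is_walk_def by blast
  then have "{x,y} \<in> E" by simp
  moreover have "is_walk E (y # xs)" unfolding is_walk_def
  proof (intro conjI allI impI)
    fix i assume "Suc i < length (y # xs)"
    then have "Suc (Suc i) < length (x # y # xs)" by simp
    then have "{(x#y#xs) ! Suc i, (x#y#xs) ! Suc (Suc i)} \<in> E" using w unfolding is_walk_def by blast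
    then show "{(y#xs) ! i, (y#xs) ! Suc i} \<in> E" by simp
  qed simp
  ultimately show "{x,y} \<in> E \<and> is_walk E (y # xs)" by simp
next
  assume a: "{x,y} \<in> E \<and> is_walk E (y # xs)"
  show "is_walk E (x # y # xs)" unfolding is_walk_def
  proof (intro conjI allI impI)
    fix i assume i: "Suc i < length (x # y # xs)"
    show "{(x#y#xs) ! i, (x#y#xs) ! Suc i} \<in> E"
    proof (cases i)
      case 0 then show ?thesis using a by simp
    next
      case (Suc j)
      then have "Suc j < length (y # xs)" using i by simp
      then have "{(y#xs) ! j, (y#xs) ! Suc j} \<in> E" using a unfolding is_walk_def by blast
      then show ?thesis using Suc by simp
    qed
  qed simp
qed

lemma is_walk_append:
  "is_walk E (xs @ [x]) \<Longrightarrow> is_walk E (x # ys) \<Longrightarrow> is_walk E (xs @ x # ys)"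
proof (induction xs)
  case Nil then show ?case by simp
next
  case (Cons a xs)
  then show ?case by (cases xs) auto
qed

lemma cycle_edges_img: "cycle_edges xs = (\<lambda>i. {xs!i, xs!(Suc i mod length xs)}) ` {..<length xs}"
  unfolding cycle_edges_def by blast

lemma lt345: "{..<3::nat} = {0,1,2}" "{..<4::nat} = {0,1,2,3}" "{..<5::nat} = {0,1,2,3,4}"
  by auto

lemma cyc_edges_explicit:
  "cycle_edges [a,b,c] = {{a,b},{b,c},{c,a}}"
  "cycle_edges [a,b,c,d] = {{a,b},{b,c},{c,d},{d,a}}"
  "cycle_edges [a,b,c,d,e] = {{a,b},{b,c},{c,d},{d,e},{e,a}}"
  unfolding cycle_edges_img by (simp_all add: lessThan_Suc insert_commute)

lemma all3: "(\<forall>i<(3::nat). P i) \<longleftrightarrow> P 0 \<and> P 1 \<and> P 2"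
proof
  assume "\<forall>i<3. P i" then show "P 0 \<and> P 1 \<and> P 2" by simp
next
  assume a: "P 0 \<and> P 1 \<and> P 2" show "\<forall>i<3. P i"
  proof (intro allI impI)
    fix i :: nat assume "i<3" then have "i=0 \<or> i=1 \<or> i=2" by arith
    then show "P i" using a by auto
  qed
qed
lemma all4: "(\<forall>i<(4::nat). P i) \<longleftrightarrow> P 0 \<and> P 1 \<and> P 2 \<and> P 3"
proof
  assume "\<forall>i<4. P i" then show "P 0 \<and> P 1 \<and> P 2 \<and> P 3" by simp
next
  assume a: "P 0 \<and> P 1 \<and> P 2 \<and> P 3" show "\<forall>i<4. P i"
  proof (intro allI impI)
    fix i :: nat assume "i<4" then have "i=0 \<or> i=1 \<or> i=2 \<or> i=3" by arith
    then show "P i" using a by auto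
  qed
qed
lemma all5: "(\<forall>i<(5::nat). P i) \<longleftrightarrow> P 0 \<and> P 1 \<and> P 2 \<and> P 3 \<and> P 4"
proof
  assume "\<forall>i<5. P i" then show "P 0 \<and> P 1 \<and> P 2 \<and> P 3 \<and> P 4" by simp
next
  assume a: "P 0 \<and> P 1 \<and> P 2 \<and> P 3 \<and> P 4" show "\<forall>i<5. P i"
  proof (intro allI impI)
    fix i :: nat assume "i<5" then have "i=0 \<or> i=1 \<or> i=2 \<or> i=3 \<or> i=4" by arith
    then show "P i" using a by auto
  qed
qed
lemma cyc_explicit:
  "distinct [a,b,c] \<Longrightarrow> {a,b} \<in> E \<Longrightarrow> {b,c} \<in> E \<Longrightarrow> {c,a} \<in> E \<Longrightarrow> is_cycle E [a,b,c]"
  "distinct [a,b,c,d] \<Longrightarrow> {a,b} \<in> E \<Longrightarrow> {b,c} \<in> E \<Longrightarrow> {c,d} \<in> E \<Longrightarrow> {d,a} \<in> E \<Longrightarrow> is_cycle E [a,b,c,d]"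
  "distinct [a,b,c,d,e] \<Longrightarrow> {a,b} \<in> E \<Longrightarrow> {b,c} \<in> E \<Longrightarrow> {c,d} \<in> E \<Longrightarrow> {d,e} \<in> E \<Longrightarrow> {e,a} \<in> E
     \<Longrightarrow> is_cycle E [a,b,c,d,e]"
proof -
  have l: "length [a,b,c] = 3" "length [a,b,c,d] = 4" "length [a,b,c,d,e] = 5" by simp_all
  show "distinct [a,b,c] \<Longrightarrow> {a,b} \<in> E \<Longrightarrow> {b,c} \<in> E \<Longrightarrow> {c,a} \<in> E \<Longrightarrow> is_cycle E [a,b,c]"
    unfolding is_cycle_def l all3 by simp
  show "distinct [a,b,c,d] \<Longrightarrow> {a,b} \<in> E \<Longrightarrow> {b,c} \<in> E \<Longrightarrow> {c,d} \<in> E \<Longrightarrow> {d,a} \<in> E \<Longrightarrow> is_cycle E [a,b,c,d]"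
    unfolding is_cycle_def l all4 by simp
  show "distinct [a,b,c,d,e] \<Longrightarrow> {a,b} \<in> E \<Longrightarrow> {b,c} \<in> E \<Longrightarrow> {c,d} \<in> E \<Longrightarrow> {d,e} \<in> E \<Longrightarrow> {e,a} \<in> E
     \<Longrightarrow> is_cycle E [a,b,c,d,e]"
    unfolding is_cycle_def l all5 by simp
qed


definition reach :: "'a set set \<Rightarrow> 'a \<Rightarrow> 'a \<Rightarrow> bool" where
  "reach E r y \<longleftrightarrow> y = r \<or> {r,y} \<in> E \<or> (\<exists>u. {r,u} \<in> E \<and> {u,y} \<in> E)"

definition mid :: "'a set set \<Rightarrow> 'a \<Rightarrow> 'a \<Rightarrow> 'a" where
  "mid E r y = (SOME u. {r,u} \<in> E \<and> {u,y} \<in> E)"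

definition pth :: "'a set set \<Rightarrow> 'a \<Rightarrow> 'a \<Rightarrow> 'a set set" where
  "pth E r y = (if y = r then {} else if {r,y} \<in> E then {{r,y}} else {{r, mid E r y}, {mid E r y, y}})"

definition cls :: "'a set set \<Rightarrow> 'a \<Rightarrow> 'a \<Rightarrow> nat" where
  "cls E r y = (if y = r then 0 else if {r,y} \<in> E then 1 else 2)"

definition Wc :: "'a set set \<Rightarrow> 'a \<Rightarrow> 'a \<Rightarrow> 'a \<Rightarrow> 'a set set" where
  "Wc E r x y = sd (sd (pth E r x) (pth E r y)) {{x,y}}"

lemma cyc_in_span: "is_cycle E xs \<Longrightarrow> length xs \<le> 11 \<Longrightarrow> cycle_edges xs \<in> short_cycle_span 11 E"
  unfolding short_cycle_span_def by (rule span_single) blast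

lemma edge_neq: "\<forall>e\<in>E. \<exists>a b. e = {a,b} \<and> a \<noteq> b \<Longrightarrow> {x,y} \<in> E \<Longrightarrow> x \<noteq> y"
  by (metis doubleton_eq_iff insert_absorb2 singleton_insert_inj_eq)

lemma mid_prop:
  assumes "reach E r y" "y \<noteq> r" "{r,y} \<notin> E"
  shows "{r, mid E r y} \<in> E \<and> {mid E r y, y} \<in> E"
proof -
  have "\<exists>u. {r,u} \<in> E \<and> {u,y} \<in> E" using assms unfolding reach_def by blast
  then show ?thesis unfolding mid_def by (rule someI_ex)
qed

lemma Wc_sym: "Wc E r x y = Wc E r y x"
  unfolding Wc_def sd_def by (auto simp: insert_commute)

lemma Wc_aux:
  assumes H1: "\<forall>e\<in>E. \<exists>a b. e = {a,b} \<and> a \<noteq> b"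
    and H2: "\<forall>e\<in>E. \<forall>y\<in>e. reach E r y"
    and xy: "{x,y} \<in> E" and le: "cls E r x \<le> cls E r y"
  shows "Wc E r x y \<in> short_cycle_span 11 E"
proof -
  have nxy: "x \<noteq> y" using edge_neq[OF H1 xy] .
  have rx: "reach E r x" and ry: "reach E r y" using H2 xy by auto
  have ne: "a \<noteq> b" if "{a,b} \<in> E" for a b using edge_neq[OF H1 that] .
  consider (c0) "x = r" | (c1) "x \<noteq> r" "{r,x} \<in> E" | (c2) "x \<noteq> r" "{r,x} \<notin> E" by blast
  then show ?thesis
  proof cases
    case c0
    then have "{r,y} \<in> E" "y \<noteq> r" using xy nxy by auto
    then have "Wc E r x y = {}" using c0 unfolding Wc_def pth_def sd_def by auto
    then show ?thesis by (simp add: f2_span.zero short_cycle_span_def)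
  next
    case c1
    then have ycls: "y \<noteq> r" using le unfolding cls_def by auto
    show ?thesis
    proof (cases "{r,y} \<in> E")
      case True
      have W: "Wc E r x y = cycle_edges [r,x,y]"
        unfolding Wc_def pth_def sd_def cyc_edges_explicit using c1 True ycls nxy
        by (auto simp: doubleton_eq_iff)
      have "is_cycle E [r,x,y]" using c1 True ycls nxy xy
        by (intro cyc_explicit(1)) (auto simp: insert_commute)
      then show ?thesis unfolding W by (rule cyc_in_span) simp
    next
      case False
      define u where "u = mid E r y"
      have u: "{r,u} \<in> E" "{u,y} \<in> E" using mid_prop[OF ry ycls False] unfolding u_def by auto
      have pthy: "pth E r y = {{r,u},{u,y}}" using ycls False unfolding pth_def u_def by simp
      have pthx: "pth E r x = {{r,x}}" using c1 unfolding pth_def by simp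
      show ?thesis
      proof (cases "u = x")
        case True
        then have "Wc E r x y = {}" unfolding Wc_def pthy pthx sd_def using c1 nxy ycls
          by (auto simp: doubleton_eq_iff)
        then show ?thesis by (simp add: f2_span.zero short_cycle_span_def)
      next
        case ux: False
        have d: "r \<noteq> u" "u \<noteq> y" using ne u by auto
        have W: "Wc E r x y = cycle_edges [r,x,y,u]"
          unfolding Wc_def pthy pthx sd_def cyc_edges_explicit using c1 ycls nxy ux d
          by (auto simp: doubleton_eq_iff)
        have "is_cycle E [r,x,y,u]" using c1 ycls nxy xy ux d u
          by (intro cyc_explicit(2)) (auto simp: insert_commute)
        then show ?thesis unfolding W by (rule cyc_in_span) simp
      qed
    qed
  next
    case c2
    then have ycls: "y \<noteq> r" "{r,y} \<notin> E" using le unfolding cls_def by (auto split: if_splits)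
    define u where "u = mid E r x"
    define w where "w = mid E r y"
    have u: "{r,u} \<in> E" "{u,x} \<in> E" using mid_prop[OF rx c2] unfolding u_def by auto
    have w: "{r,w} \<in> E" "{w,y} \<in> E" using mid_prop[OF ry ycls] unfolding w_def by auto
    have pthx: "pth E r x = {{r,u},{u,x}}" using c2 unfolding pth_def u_def by simp
    have pthy: "pth E r y = {{r,w},{w,y}}" using ycls unfolding pth_def w_def by simp
    have d: "r \<noteq> u" "u \<noteq> x" "r \<noteq> w" "w \<noteq> y" using ne u w by auto
    have d2: "u \<noteq> y" "w \<noteq> x" using u w c2 ycls by auto
    show ?thesis
    proof (cases "u = w")
      case True
      have W: "Wc E r x y = cycle_edges [u,x,y]"
        unfolding Wc_def pthy pthx sd_def cyc_edges_explicit using c2 ycls nxy d d2 True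
        by (auto simp: doubleton_eq_iff)
      have "is_cycle E [u,x,y]" using c2 ycls nxy xy d d2 u w True
        by (intro cyc_explicit(1)) (auto simp: insert_commute)
      then show ?thesis unfolding W by (rule cyc_in_span) simp
    next
      case False
      have W: "Wc E r x y = cycle_edges [r,u,x,y,w]"
        unfolding Wc_def pthy pthx sd_def cyc_edges_explicit using c2 ycls nxy d d2 False
        by (auto simp: doubleton_eq_iff)
      have "is_cycle E [r,u,x,y,w]" using c2 ycls nxy xy d d2 u w False
        by (intro cyc_explicit(3)) (auto simp: insert_commute)
      then show ?thesis unfolding W by (rule cyc_in_span) simp
    qed
  qed
qed

lemma Wc_span:
  assumes H1: "\<forall>e\<in>E. \<exists>a b. e = {a,b} \<and> a \<noteq> b"
    and H2: "\<forall>e\<in>E. \<forall>y\<in>e. reach E r y"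
    and xy: "{x,y} \<in> E"
  shows "Wc E r x y \<in> short_cycle_span 11 E"
proof (cases "cls E r x \<le> cls E r y")
  case True then show ?thesis using Wc_aux[OF H1 H2 xy] by blast
next
  case False
  have "{y,x} \<in> E" using xy by (simp add: insert_commute)
  then show ?thesis using Wc_aux[OF H1 H2, of y x] False Wc_sym[of E r x y] by simp
qed



lemma rot_sum:
  assumes k: "k > 0"
  shows "(\<Sum>i<k. f (Suc i mod k)) = (\<Sum>i<k. (f i :: nat))"
proof -
  obtain k' where k': "k = Suc k'" using k by (cases k) auto
  have "(\<Sum>i<k. f (Suc i mod k)) = (\<Sum>i<k'. f (Suc i mod k)) + f (Suc k' mod k)"
    unfolding k' by simp
  also have "(\<Sum>i<k'. f (Suc i mod k)) = (\<Sum>i<k'. f (Suc i))"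
    by (intro sum.cong refl) (simp add: k')
  also have "f (Suc k' mod k) = f 0" by (simp add: k')
  also have "(\<Sum>i<k'. f (Suc i)) + f 0 = (\<Sum>i<k. f i)"
    unfolding k' sum.lessThan_Suc_shift by (simp only: add.commute)
  finally show ?thesis .
qed

lemma mod_contra:
  assumes "i < k" "j < k" "3 \<le> k" "i = Suc j mod k" "j = Suc i mod k"
  shows False
proof -
  have a: "Suc j mod k = (if Suc j = k then 0 else Suc j)" using assms(2) by (simp add: mod_Suc)
  have b: "Suc i mod k = (if Suc i = k then 0 else Suc i)" using assms(1) by (simp add: mod_Suc)
  show False
  proof (cases "Suc j = k")
    case True
    then have i0: "i = 0" using assms(4) a by simp
    then have "Suc i \<noteq> k" using assms(3) by simp
    then have "j = Suc i" using assms(5) b by simp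
    then show False using True i0 assms(3) by simp
  next
    case False
    then have i1: "i = Suc j" using assms(4) a by simp
    show False
    proof (cases "Suc i = k")
      case True
      then have "j = 0" using assms(5) b by simp
      then show False using True i1 assms(3) by simp
    next
      case False
      then have "j = Suc i" using assms(5) b by simp
      then show False using i1 by simp
    qed
  qed
qed

lemma cyc_edge_inj:
  assumes c: "is_cycle E xs" and i: "i < length xs" and j: "j < length xs"
    and eq: "{xs!i, xs!(Suc i mod length xs)} = {xs!j, xs!(Suc j mod length xs)}"
  shows "i = j"
proof -
  let ?k = "length xs"
  have d: "distinct xs" and k3: "3 \<le> ?k" using c unfolding is_cycle_def by auto
  have k0: "0 < ?k" using k3 by linarith
  have ki: "Suc i mod ?k < ?k" "Suc j mod ?k < ?k" using mod_less_divisor[OF k0] by auto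
  have eq2: "(xs!i = xs!j \<and> xs!(Suc i mod ?k) = xs!(Suc j mod ?k)) \<or>
      (xs!i = xs!(Suc j mod ?k) \<and> xs!(Suc i mod ?k) = xs!j)"
    using eq unfolding doubleton_eq_iff .
  show ?thesis
  proof (cases "xs!i = xs!j")
    case True then show ?thesis using nth_eq_iff_index_eq[OF d i j] by blast
  next
    case False
    then have e1: "xs!i = xs!(Suc j mod ?k)" and e2: "xs!(Suc i mod ?k) = xs!j" using eq2 by blast+
    have m1: "i = Suc j mod ?k" using e1 nth_eq_iff_index_eq[OF d i ki(2)] by blast
    have m2: "Suc i mod ?k = j" using e2 nth_eq_iff_index_eq[OF d ki(1) j] by blast
    show ?thesis using mod_contra[OF i j k3 m1 m2[symmetric]] by (rule FalseE)
  qed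
qed

lemma cyc_span:
  assumes H1: "\<forall>e\<in>E. \<exists>a b. e = {a,b} \<and> a \<noteq> b"
    and H2: "\<forall>e\<in>E. \<forall>y\<in>e. reach E r y"
    and c: "is_cycle E xs"
  shows "cycle_edges xs \<in> short_cycle_span 11 E"
proof -
  define k where "k = length xs"
  have k3: "3 \<le> k" using c unfolding is_cycle_def k_def by auto
  define x where "x i = xs ! i" for i
  define nx where "nx i = xs ! (Suc i mod k)" for i
  define cc where "cc i e = (of_bool (e \<in> pth E r (x i)) + of_bool (e = {x i, nx i}) + of_bool (e \<in> pth E r (nx i)) :: nat)" for i e
  have edges: "{x i, nx i} \<in> E" if "i < k" for i
    using c that unfolding is_cycle_def x_def nx_def k_def by auto
  have step: "\<forall>i<k. {e. odd (cc i e)} \<in> f2_span {cycle_edges xs | xs. is_cycle E xs \<and> length xs \<le> 11}"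
  proof (intro allI impI)
    fix i assume "i < k"
    have "{e. odd (cc i e)} = Wc E r (x i) (nx i)"
      unfolding cc_def Wc_def sd_def by auto
    then show "{e. odd (cc i e)} \<in> f2_span {cycle_edges xs | xs. is_cycle E xs \<and> length xs \<le> 11}"
      using Wc_span[OF H1 H2 edges[OF \<open>i < k\<close>]] unfolding short_cycle_span_def by simp
  qed
  have S: "{e. odd (\<Sum>i<k. cc i e)} \<in> short_cycle_span 11 E"
    using span_sum[OF step] unfolding short_cycle_span_def .
  have sumcc: "(\<Sum>i<k. cc i e) = 2 * (\<Sum>i<k. of_bool (e \<in> pth E r (x i))) + (\<Sum>i<k. of_bool (e = {x i, nx i}))" for e
  proof -
    have "(\<Sum>i<k. of_bool (e \<in> pth E r (nx i)) :: nat) = (\<Sum>i<k. of_bool (e \<in> pth E r (x i)))"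
      unfolding nx_def x_def using rot_sum[of k "\<lambda>j. of_bool (e \<in> pth E r (xs ! j))"] k3 by simp
    then show ?thesis unfolding cc_def by (simp add: sum.distrib)
  qed
  have oddiff: "odd (\<Sum>i<k. of_bool (e = {x i, nx i}) :: nat) \<longleftrightarrow> e \<in> cycle_edges xs" for e
  proof -
    have cnt: "(\<Sum>i<k. of_bool (e = {x i, nx i}) :: nat) = card {i\<in>{..<k}. e = {x i, nx i}}"
    proof -
      have "(\<Sum>i<k. of_bool (e = {x i, nx i}) :: nat) = (\<Sum>i<k. if e = {x i, nx i} then 1 else 0)"
        by (intro sum.cong refl) simp
      also have "\<dots> = card ({..<k} \<inter> {i. e = {x i, nx i}})" by (simp add: sum.If_cases)
      also have "{..<k} \<inter> {i. e = {x i, nx i}} = {i\<in>{..<k}. e = {x i, nx i}}" by blast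
      finally show ?thesis .
    qed
    show ?thesis
    proof (cases "e \<in> cycle_edges xs")
      case True
      then obtain j where j: "j < k" "e = {x j, nx j}"
        unfolding cycle_edges_def x_def nx_def k_def by blast
      have "{i\<in>{..<k}. e = {x i, nx i}} = {j}"
      proof (intro equalityI subsetI)
        fix i assume "i \<in> {i\<in>{..<k}. e = {x i, nx i}}"
        then have "i < k" "{xs!i, xs!(Suc i mod length xs)} = {xs!j, xs!(Suc j mod length xs)}"
          using j unfolding x_def nx_def k_def by auto
        then show "i \<in> {j}" using cyc_edge_inj[OF c] j unfolding k_def by auto
      qed (use j in auto)
      then show ?thesis using cnt True by simp
    next
      case False
      have "{i\<in>{..<k}. e = {x i, nx i}} = {}"
        using False unfolding cycle_edges_def x_def nx_def k_def by blast
      then show ?thesis using cnt False by simp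
    qed
  qed
  have "{e. odd (\<Sum>i<k. cc i e)} = cycle_edges xs"
    using oddiff unfolding sumcc by auto
  then show ?thesis using S by simp
qed

lemma cs_eq:
  assumes H1: "\<forall>e\<in>E. \<exists>a b. e = {a,b} \<and> a \<noteq> b"
    and H2: "\<forall>e\<in>E. \<forall>y\<in>e. reach E r y"
  shows "cycle_space E = short_cycle_span 11 E"
proof (intro equalityI subsetI)
  fix X assume "X \<in> cycle_space E"
  then have "X \<in> f2_span {cycle_edges xs | xs. is_cycle E xs}" unfolding cycle_space_def .
  then show "X \<in> short_cycle_span 11 E"
  proof (induction rule: f2_span.induct)
    case zero then show ?case by (simp add: short_cycle_span_def f2_span.zero)
  next
    case (add X C)
    then obtain xs where C: "C = cycle_edges xs" "is_cycle E xs" by blast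
    have "(X - C) \<union> (C - X) = sd X C" unfolding sd_def ..
    have "sd X C \<in> short_cycle_span 11 E"
      using span_sd[of X _ C] add.IH cyc_span[OF H1 H2 C(2)] C(1) unfolding short_cycle_span_def by blast
    then show ?case using \<open>(X - C) \<union> (C - X) = sd X C\<close> by simp
  qed
next
  fix X assume "X \<in> short_cycle_span 11 E"
  then show "X \<in> cycle_space E" unfolding short_cycle_span_def cycle_space_def
    by (rule span_mono) blast
qed

lemma conn:
  assumes R: "\<forall>y\<in>B. reach E r y"
  shows "connected_graph B E"
  unfolding connected_graph_def
proof (intro ballI)
  fix u v assume u: "u \<in> B" and v: "v \<in> B"
  obtain xs where xs: "is_walk E (xs @ [r])" "hd (xs @ [r]) = u"
  proof -
    have "reach E r u" using R u by blast
    then consider "u = r" | "{r,u} \<in> E" | a where "{r,a} \<in> E" "{a,u} \<in> E" unfolding reach_def by blast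
    then show thesis
    proof cases
      case 1 then show ?thesis using that[of "[]"] by simp
    next
      case 2 then show ?thesis using that[of "[u]"] by (simp add: insert_commute)
    next
      case 3 then show ?thesis using that[of "[u,a]"] by (simp add: insert_commute)
    qed
  qed
  obtain ys where ys: "is_walk E (r # ys)" "last (r # ys) = v"
  proof -
    have "reach E r v" using R v by blast
    then consider "v = r" | "{r,v} \<in> E" | a where "{r,a} \<in> E" "{a,v} \<in> E" unfolding reach_def by blast
    then show thesis
    proof cases
      case 1 then show ?thesis using that[of "[]"] by simp
    next
      case 2 then show ?thesis using that[of "[v]"] by simp
    next
      case 3 then show ?thesis using that[of "[a,v]"] by simp
    qed
  qed
  have w: "is_walk E (xs @ r # ys)" using is_walk_append[OF xs(1) ys(1)] .
  have h: "hd (xs @ r # ys) = u" using xs(2) by (cases xs) auto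
  have l: "last (xs @ r # ys) = v" using ys(2) by simp
  show "\<exists>zs. is_walk E zs \<and> hd zs = u \<and> last zs = v" using w h l by blast
qed



lemma cs_sum:
  fixes x :: "nat \<Rightarrow> real"
  assumes Z: "finite Z"
  shows "(\<Sum>y\<in>Z. x y)^2 \<le> real (card Z) * (\<Sum>y\<in>Z. (x y)^2)"
proof (cases "card Z = 0")
  case True then show ?thesis using Z by simp
next
  case False
  define c where "c = real (card Z)"
  define s where "s = (\<Sum>y\<in>Z. x y)"
  define q where "q = (\<Sum>y\<in>Z. (x y)^2)"
  have cpos: "c > 0" using False unfolding c_def by simp
  have "0 \<le> (\<Sum>y\<in>Z. (c * x y - s)^2)" by (intro sum_nonneg) simp
  also have "(\<Sum>y\<in>Z. (c * x y - s)^2) = (\<Sum>y\<in>Z. c^2 * (x y)^2 - 2*c*s * x y + s^2)"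
    by (intro sum.cong refl) (simp add: power2_eq_square algebra_simps)
  also have "\<dots> = c^2 * q - 2*c*s*s + c * s^2"
    unfolding q_def s_def c_def by (simp add: sum.distrib sum_subtractf sum_distrib_left)
  also have "\<dots> = c * (c * q - s^2)" by (simp add: power2_eq_square algebra_simps)
  finally have "0 \<le> c * q - s^2" using cpos by (simp add: zero_le_mult_iff)
  then show ?thesis unfolding c_def s_def q_def by simp
qed

definition ball2 :: "nat \<Rightarrow> nat set set \<Rightarrow> nat \<Rightarrow> nat set" where
  "ball2 n E' r = {y. y < n \<and> (y = r \<or> {r,y} \<in> E' \<or> (\<exists>u. {r,u} \<in> E' \<and> {u,y} \<in> E'))}"

lemma sum_cod:
  assumes E: "sgp n E" and reg: "\<forall>v<n. degree E v = d" and r: "r < n"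
  shows "(\<Sum>y<n. cod n E r y) = real d * real d"
proof -
  have "(\<Sum>y<n. cod n E r y) = (\<Sum>k<n. \<Sum>y<n. adj E r k * adj E k y)"
    unfolding cod_def by (rule sum.swap)
  also have "\<dots> = (\<Sum>k<n. adj E r k * real d)"
    by (intro sum.cong refl) (simp add: sum_distrib_left[symmetric] deg_sum[OF E] reg)
  also have "\<dots> = (\<Sum>k<n. adj E r k) * real d" by (rule sum_distrib_right[symmetric])
  also have "\<dots> = real d * real d" using deg_sum[OF E r] reg r by simp
  finally show ?thesis .
qed

lemma dev_eq:
  assumes E: "sgp n E" and reg: "\<forall>v<n. degree E v = d" and r: "r < n" and n: "n > 0"
  shows "(\<Sum>y<n. (cod n E r y - real d^2 / real n)^2) = (\<Sum>y<n. (cod n E r y)^2) - real d ^ 4 / real n"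
proof -
  define a where "a = real d^2 / real n"
  have "(\<Sum>y<n. (cod n E r y - a)^2) = (\<Sum>y<n. (cod n E r y)^2 - 2*a*cod n E r y + a^2)"
    by (intro sum.cong refl) (simp add: power2_eq_square algebra_simps)
  also have "\<dots> = (\<Sum>y<n. (cod n E r y)^2) - 2*a*(\<Sum>y<n. cod n E r y) + real n * a^2"
    by (simp add: sum.distrib sum_subtractf sum_distrib_left)
  also have "\<dots> = (\<Sum>y<n. (cod n E r y)^2) - real d ^ 4 / real n"
    using n unfolding sum_cod[OF E reg r] a_def by (simp add: power2_eq_square field_simps eval_nat_numeral)
  finally show ?thesis unfolding a_def .
qed



definition bad :: "nat \<Rightarrow> nat set set \<Rightarrow> nat set set \<Rightarrow> nat \<Rightarrow> real" where
  "bad n E E' r = (\<Sum>u<n. \<Sum>y<n. adj E r u * adj E u y * (if {r,u} \<in> E' \<and> {u,y} \<in> E' then 0 else 1))"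

lemma bad_nonneg: "bad n E E' r \<ge> 0"
  unfolding bad_def by (intro sum_nonneg) (simp add: adj_def)

lemma bad_sum:
  assumes E: "sgp n E" and reg: "\<forall>v<n. degree E v = d"
  shows "(\<Sum>r<n. bad n E E' r) \<le> 4 * real d * real (card (E - E'))"
proof -
  define M where "M = E - E'"
  have Ms: "sgp n M" using sgp_mono[OF E] unfolding M_def by blast
  have pt: "adj E r u * adj E u y * (if {r,u} \<in> E' \<and> {u,y} \<in> E' then 0 else 1)
      \<le> adj M r u * adj E u y + adj E r u * adj M u y" for r u y
    unfolding M_def adj_def by auto
  have "(\<Sum>r<n. bad n E E' r) \<le> (\<Sum>r<n. \<Sum>u<n. \<Sum>y<n. adj M r u * adj E u y + adj E r u * adj M u y)"
    unfolding bad_def by (intro sum_mono pt)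
  also have "\<dots> = (\<Sum>r<n. \<Sum>u<n. \<Sum>y<n. adj M r u * adj E u y) + (\<Sum>r<n. \<Sum>u<n. \<Sum>y<n. adj E r u * adj M u y)"
    by (simp add: sum.distrib)
  also have "(\<Sum>r<n. \<Sum>u<n. \<Sum>y<n. adj M r u * adj E u y) = (\<Sum>r<n. \<Sum>u<n. adj M r u * real d)"
    by (intro sum.cong refl) (simp add: sum_distrib_left[symmetric] deg_sum[OF E] reg)
  also have "\<dots> = (\<Sum>r<n. real (degree M r)) * real d"
    by (simp add: sum_distrib_right[symmetric] deg_sum[OF Ms])
  also have "\<dots> = 2 * real (card M) * real d" using handshake[OF Ms] by simp
  also have "(\<Sum>r<n. \<Sum>u<n. \<Sum>y<n. adj E r u * adj M u y) = (\<Sum>u<n. \<Sum>r<n. adj E r u * real (degree M u))"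
  proof -
    have "(\<Sum>r<n. \<Sum>u<n. \<Sum>y<n. adj E r u * adj M u y) = (\<Sum>u<n. \<Sum>r<n. \<Sum>y<n. adj E r u * adj M u y)"
      by (rule sum.swap)
    also have "\<dots> = (\<Sum>u<n. \<Sum>r<n. adj E r u * real (degree M u))"
      by (intro sum.cong refl) (simp add: sum_distrib_left[symmetric] deg_sum[OF Ms])
    finally show ?thesis .
  qed
  also have "\<dots> = (\<Sum>u<n. real d * real (degree M u))"
  proof (intro sum.cong refl)
    fix u assume u: "u \<in> {..<n}"
    have "(\<Sum>r<n. adj E r u) = real d" using deg_sum[OF E, of u] reg u by (simp add: adj_sym)
    then show "(\<Sum>r<n. adj E r u * real (degree M u)) = real d * real (degree M u)"
      by (simp add: sum_distrib_right[symmetric])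
  qed
  also have "\<dots> = real d * (2 * real (card M))" using handshake[OF Ms] by (simp add: sum_distrib_left[symmetric])
  finally show ?thesis unfolding M_def by simp
qed

lemma Z_bound:
  assumes r: "r < n"
  shows "(\<Sum>y\<in>{..<n} - ball2 n E' r. cod n E r y) \<le> bad n E E' r"
proof -
  let ?f = "\<lambda>u y. adj E r u * adj E u y * (if {r,u} \<in> E' \<and> {u,y} \<in> E' then 0 else 1)"
  have eq: "cod n E r y = (\<Sum>u<n. ?f u y)" if y: "y \<in> {..<n} - ball2 n E' r" for y
    unfolding cod_def
  proof (intro sum.cong refl)
    fix u assume "u \<in> {..<n}"
    have "\<not> ({r,u} \<in> E' \<and> {u,y} \<in> E')" using y unfolding ball2_def by blast
    then show "adj E r u * adj E u y = ?f u y" by auto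
  qed
  have "(\<Sum>y\<in>{..<n} - ball2 n E' r. cod n E r y) = (\<Sum>y\<in>{..<n} - ball2 n E' r. \<Sum>u<n. ?f u y)"
    using eq by (rule sum.cong[OF refl])
  also have "\<dots> \<le> (\<Sum>y<n. \<Sum>u<n. ?f u y)"
    by (rule sum_mono2) (auto intro!: sum_nonneg simp: adj_def)
  also have "\<dots> = bad n E E' r" unfolding bad_def by (rule sum.swap)
  finally show ?thesis .
qed



lemma count_main:
  assumes E: "sgp n E" and reg: "\<forall>v<n. degree E v = d" and n: "n > 0"
    and C4: "(\<Sum>i<n. \<Sum>j<n. (cod n E i j)^2) \<le> real d ^ 4 + K" and K: "K \<ge> 0"
  shows "\<exists>r<n. real (card ({..<n} - ball2 n E' r)) * real d ^ 2
     \<le> real n * (2 * (4 * real d * real (card (E - E')) / real n + 1) + sqrt (2 * real n * (K / real n + 1)))"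
proof -
  define m where "m = real (card (E - E'))"
  define a where "a = real d ^ 2 / real n"
  define dev where "dev r = (\<Sum>y<n. (cod n E r y - a)^2)" for r
  define P where "P = 4 * real d * m / real n + 1"
  define Q where "Q = K / real n + 1"
  have dev0: "dev r \<ge> 0" for r unfolding dev_def by (intro sum_nonneg) simp
  have devsum: "(\<Sum>r<n. dev r) \<le> K"
  proof -
    have "(\<Sum>r<n. dev r) = (\<Sum>r<n. (\<Sum>y<n. (cod n E r y)^2) - real d ^ 4 / real n)"
      unfolding dev_def a_def using dev_eq[OF E reg _ n] by (intro sum.cong refl) auto
    also have "\<dots> = (\<Sum>i<n. \<Sum>j<n. (cod n E i j)^2) - real d ^ 4"
      using n by (simp add: sum_subtractf)
    finally show ?thesis using C4 by simp
  qed
  have Ppos: "P > 0" unfolding P_def m_def using n by (intro add_nonneg_pos) auto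
  have Qpos: "Q > 0" unfolding Q_def using n K by (intro add_nonneg_pos) auto
  have badsum: "(\<Sum>r<n. bad n E E' r) \<le> 4 * real d * m"
    using bad_sum[OF E reg, of E'] unfolding m_def .
  have t1: "4 * real d * m / P \<le> real n"
    using Ppos n unfolding P_def by (simp add: divide_le_eq field_simps)
  have t2: "K / Q \<le> real n"
    using Qpos n unfolding Q_def by (simp add: divide_le_eq field_simps)
  have "(\<Sum>r<n. bad n E E' r / P + dev r / Q) = (\<Sum>r<n. bad n E E' r) / P + (\<Sum>r<n. dev r) / Q"
    by (simp add: sum.distrib sum_divide_distrib)
  also have "\<dots> \<le> 4 * real d * m / P + K / Q"
    using badsum devsum Ppos Qpos by (intro add_mono divide_right_mono) auto
  also have "\<dots> \<le> 2 * real n" using t1 t2 by simp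
  finally have S: "(\<Sum>r<n. bad n E E' r / P + dev r / Q) \<le> 2 * real n" .
  obtain r where r: "r < n" and rb: "bad n E E' r / P + dev r / Q \<le> 2"
  proof (rule ccontr)
    assume "\<not> thesis"
    with that have all: "\<forall>r<n. bad n E E' r / P + dev r / Q > 2" by force
    have "(\<Sum>r<n. (2::real)) < (\<Sum>r<n. bad n E E' r / P + dev r / Q)"
      using n all by (intro sum_strict_mono) auto
    then show False using S by simp
  qed
  have b1: "bad n E E' r \<le> 2 * P"
  proof -
    have "bad n E E' r / P \<le> 2" using rb dev0[of r] Qpos by (smt (verit) divide_nonneg_pos)
    then show ?thesis using Ppos by (simp add: divide_le_eq)
  qed
  have b2: "dev r \<le> 2 * Q"
  proof -
    have "dev r / Q \<le> 2" using rb bad_nonneg[of n E E' r] Ppos by (smt (verit) divide_nonneg_pos)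
    then show ?thesis using Qpos by (simp add: divide_le_eq)
  qed
  define Z where "Z = {..<n} - ball2 n E' r"
  have Zf: "finite Z" unfolding Z_def by simp
  have zn: "card Z \<le> n" unfolding Z_def by (metis card_lessThan card_mono Diff_subset finite_lessThan)
  define W where "W = (\<Sum>y\<in>Z. a - cod n E r y)"
  have za: "real (card Z) * a = (\<Sum>y\<in>Z. cod n E r y) + W"
    unfolding W_def by (simp add: sum_subtractf)
  have W2: "W^2 \<le> real n * dev r"
  proof -
    have "W^2 \<le> real (card Z) * (\<Sum>y\<in>Z. (a - cod n E r y)^2)"
      unfolding W_def by (rule cs_sum[OF Zf])
    also have "(\<Sum>y\<in>Z. (a - cod n E r y)^2) \<le> dev r"
      unfolding dev_def Z_def by (rule order.trans[OF sum_mono2[of "{..<n}"]]) (auto simp: power2_commute)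
    then have "real (card Z) * (\<Sum>y\<in>Z. (a - cod n E r y)^2) \<le> real n * dev r"
      using zn dev0 by (intro mult_mono) (auto intro: sum_nonneg)
    finally show ?thesis .
  qed
  have Wb: "W \<le> sqrt (2 * real n * Q)"
  proof -
    have "W \<le> sqrt (W^2)" by simp
    also have "\<dots> \<le> sqrt (real n * dev r)" using W2 by (rule real_sqrt_le_mono)
    also have "\<dots> \<le> sqrt (2 * real n * Q)" using b2 by (intro real_sqrt_le_mono) (simp add: mult_left_mono mult.assoc mult.left_commute[of 2])
    finally show ?thesis .
  qed
  have "real (card Z) * a \<le> 2 * P + sqrt (2 * real n * Q)"
    using za Z_bound[OF r, of E E'] b1 Wb unfolding Z_def by linarith
  then have "real n * (real (card Z) * a) \<le> real n * (2 * P + sqrt (2 * real n * Q))"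
    by (simp add: mult_left_mono)
  moreover have "real n * (real (card Z) * a) = real (card Z) * real d ^ 2"
    unfolding a_def using n by simp
  ultimately show ?thesis using r unfolding Z_def P_def Q_def m_def by auto
qed



lemma sgp_of_simple: "simple_graph {0..<t} E \<Longrightarrow> sgp t E"
  unfolding simple_graph_def sgp_def by auto

lemma sgp_elem: "sgp t E \<Longrightarrow> e \<in> E \<Longrightarrow> x \<in> e \<Longrightarrow> x < t"
  unfolding sgp_def by auto

lemma ball_reach:
  assumes S: "sgp t E'" and y: "y \<in> ball2 t E' r"
  shows "reach (del_vertices_E E' ({0..<t} - ball2 t E' r)) r y"
proof -
  let ?B = "ball2 t E' r"
  let ?E = "del_vertices_E E' ({0..<t} - ?B)"
  have inB: "r \<in> ?B \<and> v \<in> ?B" if "{r,v} \<in> E'" for v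
    using sgp_elem[OF S that] unfolding ball2_def using that by auto
  have inE: "{a,b} \<in> ?E" if "{a,b} \<in> E'" "a \<in> ?B" "b \<in> ?B" for a b
    using that unfolding del_vertices_E_def by auto
  from y have "y = r \<or> {r,y} \<in> E' \<or> (\<exists>u. {r,u} \<in> E' \<and> {u,y} \<in> E')" unfolding ball2_def by blast
  then show ?thesis
  proof (elim disjE exE conjE)
    assume "y = r" then show ?thesis unfolding reach_def by simp
  next
    assume e: "{r,y} \<in> E'"
    then show ?thesis using inB[OF e] inE[OF e] unfolding reach_def by blast
  next
    fix u assume e1: "{r,u} \<in> E'" and e2: "{u,y} \<in> E'"
    have "{r,u} \<in> ?E" using inB[OF e1] inE[OF e1] by blast
    moreover have "{u,y} \<in> ?E" using inB[OF e1] y inE[OF e2] by blast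
    ultimately show ?thesis unfolding reach_def by blast
  qed
qed

lemma graph_part:
  fixes r :: nat
  assumes sg: "simple_graph {0..<t} E" and sub: "E' \<subseteq> E"
  defines "U \<equiv> {0..<t} - ball2 t E' r"
  shows "U \<subseteq> {0..<t} \<and>
         connected_graph (del_vertices_V {0..<t} U) (del_vertices_E E' U) \<and>
         cycle_space (del_vertices_E E' U) = short_cycle_span 11 (del_vertices_E E' U)"
proof -
  have S: "sgp t E'" using sgp_mono[OF sgp_of_simple[OF sg] sub] .
  let ?B = "ball2 t E' r"
  have Bsub: "?B \<subseteq> {0..<t}" unfolding ball2_def by auto
  have V: "del_vertices_V {0..<t} U = ?B" unfolding del_vertices_V_def U_def using Bsub by blast
  let ?E = "del_vertices_E E' U"
  have R: "\<forall>y\<in>?B. reach ?E r y" unfolding U_def by (intro ballI ball_reach[OF S])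
  have H1: "\<forall>e\<in>?E. \<exists>a b. e = {a,b} \<and> a \<noteq> b"
  proof (intro ballI)
    fix e assume "e \<in> ?E"
    then have "e \<in> E'" by (simp add: del_vertices_E_def)
    then show "\<exists>a b. e = {a,b} \<and> a \<noteq> b" using S unfolding sgp_def by blast
  qed
  have H2: "\<forall>e\<in>?E. \<forall>y\<in>e. reach ?E r y"
  proof (intro ballI)
    fix e y assume e: "e \<in> ?E" and ye: "y \<in> e"
    have "e \<in> E'" "e \<inter> U = {}" using e unfolding del_vertices_E_def by auto
    then have "y < t" "y \<notin> U" using sgp_elem[OF S] ye by auto
    then have "y \<in> ?B" unfolding U_def by auto
    then show "reach ?E r y" using R by blast
  qed
  have c1: "connected_graph ?B ?E" by (rule conn[OF R])
  have c2: "cycle_space ?E = short_cycle_span 11 ?E" by (rule cs_eq[OF H1 H2])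
  have c0: "U \<subseteq> {0..<t}" unfolding U_def by (rule Diff_subset)
  show ?thesis using c0 c1 c2 unfolding V by (intro conjI)
qed

lemma h_lim:
  assumes "a > 0" "c > 0"
  shows "((\<lambda>x::real. (2 + sqrt (2 * a * x powr (7/3) + 2*x)) / (c * x powr (4/3))) \<longlongrightarrow> 0) at_top"
  using assms by real_asymp



lemma pw1: "x > 0 \<Longrightarrow> (x powr (2/3))^2 = x powr (4/3 :: real)"
  by (simp add: powr_power)

lemma pw2: "x > 0 \<Longrightarrow> (x::real) * (x powr (1/3))^4 = x powr (7/3)"
proof -
  assume x: "x > 0"
  have "(x powr (1/3))^4 = x powr (4/3)" using x by (simp add: powr_power)
  then have "x * (x powr (1/3))^4 = x powr 1 * x powr (4/3)" using x by (simp add: powr_one)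
  also have "\<dots> = x powr (1 + 4/3)" by (rule powr_add[symmetric])
  also have "(1::real) + 4/3 = 7/3" by simp
  finally show ?thesis .
qed

lemma pointwise:
  fixes E E' :: "nat set set" and t dd :: nat and C c1 :: real
  assumes sg: "simple_graph {0..<t} E" and reg: "regular {0..<t} E dd" and sub: "E' \<subseteq> E"
    and tpos: "t > 0" and c1: "c1 > 0" and dlow: "c1 * real t powr (2/3) \<le> real dd"
    and lam: "lam1 \<in># adj_eigenvalues t E"
    and rest: "\<forall>\<mu>\<in>#(adj_eigenvalues t E - {#lam1#}). cmod \<mu> \<le> C * real t powr (1/3)"
    and r: "r = (SOME r. r < t \<and> real (card ({..<t} - ball2 t E' r)) * real dd ^ 2 \<le>
        real t * (2 * (4 * real dd * real (card (E - E')) / real t + 1) +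
          sqrt (2 * real t * (real t * (C * real t powr (1/3))^4 / real t + 1))))"
  shows "real (card ({0..<t} - ball2 t E' r)) / real t \<le>
     4 * (1 - real (card E') / real (card E)) +
     (2 + sqrt (2 * (C^4 + 1) * real t powr (7/3) + 2 * real t)) / (c1^2 * real t powr (4/3))"
proof -
  define x where "x = real t"
  have x: "x > 0" unfolding x_def using tpos by simp
  define K where "K = x * (C * x powr (1/3))^4"
  define m where "m = real (card (E - E'))"
  define B where "B = x * (2 * (4 * real dd * m / x + 1) + sqrt (2 * x * (K / x + 1)))"
  have S: "sgp t E" by (rule sgp_of_simple[OF sg])
  have reg': "\<forall>v<t. degree E v = dd" using reg unfolding regular_def by auto
  have p: "x powr (2/3) > 0" using x by simp
  have dpos: "real dd > 0" using dlow c1 p unfolding x_def by (smt (verit) mult_pos_pos)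
  have K0: "K \<ge> 0" unfolding K_def using x by (simp add: zero_le_even_power)
  have C4: "(\<Sum>i<t. \<Sum>j<t. (cod t E i j)^2) \<le> real dd ^ 4 + K"
    using spec_C4[OF S reg' lam rest] unfolding K_def x_def .
  have ex: "\<exists>r<t. real (card ({..<t} - ball2 t E' r)) * real dd ^ 2 \<le> B"
    using count_main[OF S reg' tpos C4 K0, of E'] unfolding B_def m_def x_def .
  have rB: "r = (SOME r. r < t \<and> real (card ({..<t} - ball2 t E' r)) * real dd ^ 2 \<le> B)"
    unfolding B_def K_def m_def x_def by (rule r)
  have ex2: "\<exists>r. r < t \<and> real (card ({..<t} - ball2 t E' r)) * real dd ^ 2 \<le> B" using ex by blast
  have rp: "r < t \<and> real (card ({..<t} - ball2 t E' r)) * real dd ^ 2 \<le> B"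
    unfolding rB by (rule someI_ex[OF ex2])
  define z where "z = real (card ({0..<t} - ball2 t E' r))"
  have z0: "z \<ge> 0" unfolding z_def by simp
  have zB: "z * real dd ^ 2 \<le> B" using rp unfolding z_def by (simp add: atLeast0LessThan)
  have dd2: "real dd ^ 2 > 0" using dpos by simp
  have step1: "z / x \<le> B / (x * real dd ^ 2)"
  proof -
    have "z / x = (z * real dd ^ 2) / (x * real dd ^ 2)" using dd2 by simp
    also have "\<dots> \<le> B / (x * real dd ^ 2)" using zB x dd2 by (intro divide_right_mono) auto
    finally show ?thesis .
  qed
  have hs: "2 * real (card E) = x * real dd"
  proof -
    have "(\<Sum>r<t. real (degree E r)) = 2 * real (card E)" by (rule handshake[OF S])
    moreover have "(\<Sum>r<t. real (degree E r)) = real t * real dd" using reg' by simp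
    ultimately show ?thesis unfolding x_def by simp
  qed
  have cE: "real (card E) > 0" using hs x dpos by (smt (verit) mult_pos_pos)
  have finE: "finite E" by (rule sgp_finite[OF S])
  have mE: "m = real (card E) - real (card E')"
    unfolding m_def using card_Diff_subset[OF finite_subset[OF sub finE] sub] card_mono[OF finE sub]
    by (simp add: of_nat_diff)
  have eqB: "B / (x * real dd ^ 2) = 4 * (1 - real (card E') / real (card E)) + (2 + sqrt (2 * x * (K / x + 1))) / real dd ^ 2"
  proof -
    have "B / (x * real dd ^ 2) = 8 * m / (x * real dd) + (2 + sqrt (2 * x * (K / x + 1))) / real dd ^ 2"
      unfolding B_def using x dpos by (simp add: field_simps power2_eq_square)
    also have "8 * m / (x * real dd) = 4 * (1 - real (card E') / real (card E))"
      unfolding mE hs[symmetric] using cE by (simp add: field_simps)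
    finally show ?thesis .
  qed
  have Kb: "2 * x * (K / x + 1) \<le> 2 * (C^4 + 1) * x powr (7/3) + 2 * x"
  proof -
    have "K = C^4 * x powr (7/3)"
      unfolding K_def using pw2[OF x] by (simp add: power_mult_distrib algebra_simps)
    moreover have "x powr (7/3) \<ge> 0" by simp
    ultimately have "K \<le> (C^4 + 1) * x powr (7/3)" by (simp add: algebra_simps)
    moreover have "2 * x * (K / x + 1) = 2 * K + 2 * x" using x by (simp add: field_simps)
    ultimately show ?thesis by (simp add: algebra_simps)
  qed
  have dlow2: "real dd ^ 2 \<ge> c1^2 * x powr (4/3)"
  proof -
    have "(c1 * x powr (2/3))^2 \<le> real dd ^ 2"
      using dlow c1 p unfolding x_def by (intro power_mono) auto
    then show ?thesis using pw1[OF x] by (simp add: power_mult_distrib)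
  qed
  have den: "c1^2 * x powr (4/3) > 0" using c1 x by simp
  have step2: "(2 + sqrt (2 * x * (K / x + 1))) / real dd ^ 2 \<le>
      (2 + sqrt (2 * (C^4 + 1) * x powr (7/3) + 2 * x)) / (c1^2 * x powr (4/3))"
  proof (rule frac_le)
    have nn: "0 \<le> 2 * (C^4 + 1) * x powr (7/3) + 2 * x"
      using x by (intro add_nonneg_nonneg mult_nonneg_nonneg) (auto simp: zero_le_even_power add_nonneg_nonneg)
    have "0 \<le> sqrt (2 * (C^4 + 1) * x powr (7/3) + 2 * x)" using nn by (rule real_sqrt_ge_zero)
    then show "0 \<le> 2 + sqrt (2 * (C^4 + 1) * x powr (7/3) + 2 * x)" by linarith
    show "2 + sqrt (2 * x * (K / x + 1)) \<le> 2 + sqrt (2 * (C^4 + 1) * x powr (7/3) + 2 * x)"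
      using Kb by (simp add: real_sqrt_le_mono)
    show "0 < c1^2 * x powr (4/3)" by (rule den)
    show "c1^2 * x powr (4/3) \<le> real dd ^ 2" by (rule dlow2)
  qed
  show ?thesis using step1 step2 eqB unfolding z_def[symmetric] x_def[symmetric] by linarith
qed



theorem proposition4p9:
  fixes T :: "nat set" and H :: "nat \<Rightarrow> nat set set" and d :: "nat \<Rightarrow> nat"
  assumes T_inf: "infinite T" and T_pos: "\<forall>t\<in>T. t > 0"
    and H_graph: "\<forall>t\<in>T. simple_graph {0..<t} (H t) \<and> triangle_free (H t) \<and> regular {0..<t} (H t) (d t)"
    and d_Theta: "\<exists>c1 c2. c1 > 0 \<and> c2 > 0 \<and> (\<forall>\<^sub>F t in along T.
        c1 * real t powr (2/3) \<le> real (d t) \<and> real (d t) \<le> c2 * real t powr (2/3))"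
    and eig: "\<exists>C. \<forall>\<^sub>F t in along T. \<exists>lam1\<in>#adj_eigenvalues t (H t).
        (\<forall>\<mu>\<in>#adj_eigenvalues t (H t). Re \<mu> \<le> Re lam1) \<and>
        (\<forall>\<mu>\<in>#(adj_eigenvalues t (H t) - {#lam1#}). cmod \<mu> \<le> C * real t powr (1/3))"
  shows "\<forall>H' :: nat \<Rightarrow> nat set set.
     (\<forall>t\<in>T. H' t \<subseteq> H t) \<and>
     ((\<lambda>t. real (card (H' t)) / real (card (H t))) \<longlongrightarrow> 1) (along T)
     \<longrightarrow> (\<exists>U :: nat \<Rightarrow> nat set.
          (\<forall>t\<in>T. U t \<subseteq> {0..<t} \<and>
             connected_graph (del_vertices_V {0..<t} (U t)) (del_vertices_E (H' t) (U t)) \<and>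
             cycle_space (del_vertices_E (H' t) (U t)) =
               short_cycle_span 11 (del_vertices_E (H' t) (U t))) \<and>
          ((\<lambda>t. real (card (U t)) / real t) \<longlongrightarrow> 0) (along T))"
proof (intro allI impI)
  fix H' :: "nat \<Rightarrow> nat set set"
  assume A: "(\<forall>t\<in>T. H' t \<subseteq> H t) \<and>
     ((\<lambda>t. real (card (H' t)) / real (card (H t))) \<longlongrightarrow> 1) (along T)"
  then have sub: "\<forall>t\<in>T. H' t \<subseteq> H t"
    and lim1: "((\<lambda>t. real (card (H' t)) / real (card (H t))) \<longlongrightarrow> 1) (along T)" by auto
  from d_Theta obtain c1 c2 where c1: "c1 > 0" and
    evd: "\<forall>\<^sub>F t in along T. c1 * real t powr (2/3) \<le> real (d t) \<and> real (d t) \<le> c2 * real t powr (2/3)"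
    by blast
  from eig obtain C where evC: "\<forall>\<^sub>F t in along T. \<exists>lam1\<in>#adj_eigenvalues t (H t).
        (\<forall>\<mu>\<in>#adj_eigenvalues t (H t). Re \<mu> \<le> Re lam1) \<and>
        (\<forall>\<mu>\<in>#(adj_eigenvalues t (H t) - {#lam1#}). cmod \<mu> \<le> C * real t powr (1/3))"
    by blast
  define r where "r t = (SOME r. r < t \<and> real (card ({..<t} - ball2 t (H' t) r)) * real (d t) ^ 2 \<le>
        real t * (2 * (4 * real (d t) * real (card (H t - H' t)) / real t + 1) +
          sqrt (2 * real t * (real t * (C * real t powr (1/3))^4 / real t + 1))))" for t
  define U where "U t = {0..<t} - ball2 t (H' t) (r t)" for t
  have part1: "\<forall>t\<in>T. U t \<subseteq> {0..<t} \<and>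
             connected_graph (del_vertices_V {0..<t} (U t)) (del_vertices_E (H' t) (U t)) \<and>
             cycle_space (del_vertices_E (H' t) (U t)) =
               short_cycle_span 11 (del_vertices_E (H' t) (U t))"
  proof
    fix t assume t: "t \<in> T"
    have sg: "simple_graph {0..<t} (H t)" using H_graph t by blast
    show "U t \<subseteq> {0..<t} \<and>
             connected_graph (del_vertices_V {0..<t} (U t)) (del_vertices_E (H' t) (U t)) \<and>
             cycle_space (del_vertices_E (H' t) (U t)) =
               short_cycle_span 11 (del_vertices_E (H' t) (U t))"
      unfolding U_def by (rule graph_part[OF sg]) (use sub t in blast)
  qed
  define a where "a = C^4 + 1"
  define h where "h x = (2 + sqrt (2 * a * x powr (7/3) + 2*x)) / (c1^2 * x powr (4/3))" for x :: real
  define g where "g t = 4 * (1 - real (card (H' t)) / real (card (H t))) + h (real t)" for t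
  have apos: "a > 0" unfolding a_def by (simp add: add_nonneg_pos zero_le_even_power)
  have hlim: "((\<lambda>t. h (real t)) \<longlongrightarrow> 0) (along T)"
  proof -
    have "(h \<longlongrightarrow> 0) at_top" unfolding h_def using h_lim[OF apos, of "c1^2"] c1 by simp
    then have "((\<lambda>t. h (real t)) \<longlongrightarrow> 0) sequentially"
      by (rule filterlim_compose[OF _ filterlim_real_sequentially])
    moreover have "along T \<le> sequentially" unfolding along_def by (rule inf_le1)
    ultimately show ?thesis by (rule tendsto_mono[rotated])
  qed
  have glim: "(g \<longlongrightarrow> 0) (along T)"
  proof -
    have "((\<lambda>t. 4 * (1 - real (card (H' t)) / real (card (H t))) + h (real t)) \<longlongrightarrow> 4 * (1 - 1) + 0) (along T)"
      by (intro tendsto_intros lim1 hlim)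
    then show ?thesis unfolding g_def by simp
  qed
  have evT: "\<forall>\<^sub>F t in along T. t \<in> T"
    unfolding along_def by (simp add: eventually_inf_principal)
  have evb: "\<forall>\<^sub>F t in along T. real (card (U t)) / real t \<le> g t"
    using evT evd evC
  proof eventually_elim
    case (elim t)
    then have t: "t \<in> T" and dl: "c1 * real t powr (2/3) \<le> real (d t)" by auto
    from elim obtain lam1 where lam: "lam1 \<in># adj_eigenvalues t (H t)"
      and rest: "\<forall>\<mu>\<in>#(adj_eigenvalues t (H t) - {#lam1#}). cmod \<mu> \<le> C * real t powr (1/3)" by blast
    have sg: "simple_graph {0..<t} (H t)" and reg: "regular {0..<t} (H t) (d t)" using H_graph t by auto
    have tp: "t > 0" using T_pos t by blast
    have "real (card ({0..<t} - ball2 t (H' t) (r t))) / real t \<le>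
     4 * (1 - real (card (H' t)) / real (card (H t))) +
     (2 + sqrt (2 * (C^4 + 1) * real t powr (7/3) + 2 * real t)) / (c1^2 * real t powr (4/3))"
      by (rule pointwise[OF sg reg _ tp c1 dl lam rest r_def]) (use sub t in blast)
    then show ?case unfolding U_def g_def h_def a_def .
  qed
  have ev0: "\<forall>\<^sub>F t in along T. 0 \<le> real (card (U t)) / real t" by simp
  have part2: "((\<lambda>t. real (card (U t)) / real t) \<longlongrightarrow> 0) (along T)"
    by (rule tendsto_sandwich[OF ev0 evb tendsto_const glim])
  show "\<exists>U :: nat \<Rightarrow> nat set.
          (\<forall>t\<in>T. U t \<subseteq> {0..<t} \<and>
             connected_graph (del_vertices_V {0..<t} (U t)) (del_vertices_E (H' t) (U t)) \<and>
             cycle_space (del_vertices_E (H' t) (U t)) =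
               short_cycle_span 11 (del_vertices_E (H' t) (U t))) \<and>
          ((\<lambda>t. real (card (U t)) / real t) \<longlongrightarrow> 0) (along T)"
    using part1 part2 by blast
qed


end
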